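(* Let $M\subset\mathbb{C}$ be a bounded domain, $\omega$ a finite positive Borel measure with compact support, $h$ harmonic on $M$, and $\lambda=e^{-2(p(\omega)+h)}$. If $z_0\in M$ satisfies $\omega(\{z_0\})\ge2\pi$, then every broken line $K\subset M$ having $z_0$ as an extremity satisfies $\tilde s_\lambda(K)=+\infty$; consequently $\rho_\lambda(z_0,z)=+\infty$ for every $z\in M\setminus\{z_0\}$, i.e. $z_0$ is a point at infinity of $\rho_\lambda$.
   Context: $p(z;\omega)=\frac1{2\pi}\iint\ln|z-\zeta|\,d\omega(\zeta)$. For a rectifiable arc $K$ with Euclidean length $s(K)$ and parameterization proportional to arc length $z:[0,1]\to\mathbb{C}$, $\tilde s_\lambda(K)=s(K)\int_0^1\lambda^{1/2}(z(t))\,dt$. $\rho_\lambda(a,b)$ is the infimum of $\tilde s_\lambda(L)$ over broken lines $L\subset M$ joining $a$ and $b$ (infimum of the empty set being $+\infty$). *)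

theory Defs
  imports "HOL-Analysis.Analysis"
begin

definition harmonic_on :: "complex set \<Rightarrow> (complex \<Rightarrow> real) \<Rightarrow> bool" where
  "harmonic_on M h \<longleftrightarrow> open M \<and>
     (\<exists>hx hy hxx hxy hyx hyy :: complex \<Rightarrow> real.
        (\<forall>z\<in>M. (h has_derivative (\<lambda>v. Re v * hx z + Im v * hy z)) (at z)) \<and>
        (\<forall>z\<in>M. (hx has_derivative (\<lambda>v. Re v * hxx z + Im v * hxy z)) (at z)) \<and>
        (\<forall>z\<in>M. (hy has_derivative (\<lambda>v. Re v * hyx z + Im v * hyy z)) (at z)) \<and>
        continuous_on M hxx \<and> continuous_on M hxy \<and>
        continuous_on M hyx \<and> continuous_on M hyy \<and>
        (\<forall>z\<in>M. hxx z + hyy z = 0))"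

definition msupport :: "complex measure \<Rightarrow> complex set" where
  "msupport \<omega> = {z. \<forall>e>0. emeasure \<omega> (ball z e) > 0}"

section \<open>Logarithmic potential p(z;omega) = (1/2pi) int ln|z - zeta| d omega(zeta), valued in [-inf, inf)\<close>

definition log_potential :: "complex measure \<Rightarrow> complex \<Rightarrow> ereal" where
  "log_potential \<omega> z =
     (enn2ereal (\<integral>\<^sup>+ \<zeta>. (if \<zeta> = z then 0 else ennreal (max 0 (ln (cmod (z - \<zeta>))))) \<partial>\<omega>)
      - enn2ereal (\<integral>\<^sup>+ \<zeta>. (if \<zeta> = z then \<infinity> else ennreal (max 0 (- ln (cmod (z - \<zeta>))))) \<partial>\<omega>))
     / ereal (2 * pi)"

definition lam :: "complex measure \<Rightarrow> (complex \<Rightarrow> real) \<Rightarrow> complex \<Rightarrow> ennreal" where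
  "lam \<omega> h z = (case log_potential \<omega> z of
       ereal r \<Rightarrow> ennreal (exp (-2 * (r + h z)))
     | PInfty \<Rightarrow> 0
     | MInfty \<Rightarrow> \<infinity>)"

definition ennsqrt :: "ennreal \<Rightarrow> ennreal" where
  "ennsqrt x = (if x = \<infinity> then \<infinity> else ennreal (sqrt (enn2real x)))"

definition path_length :: "(real \<Rightarrow> complex) \<Rightarrow> real \<Rightarrow> real \<Rightarrow> ennreal" where
  "path_length g a b =
     (SUP ts \<in> {ts. ts \<noteq> [] \<and> sorted ts \<and> hd ts = a \<and> last ts = b}.
        \<Sum>i<length ts - 1. ennreal (dist (g (ts ! i)) (g (ts ! Suc i))))"

definition arclength_param :: "(real \<Rightarrow> complex) \<Rightarrow> bool" where
  "arclength_param g \<longleftrightarrow>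
     (\<forall>a b. 0 \<le> a \<and> a \<le> b \<and> b \<le> 1 \<longrightarrow>
        path_length g a b = ennreal (b - a) * path_length g 0 1)"

definition broken_line :: "(real \<Rightarrow> complex) \<Rightarrow> bool" where
  "broken_line g \<longleftrightarrow>
     (\<exists>ts. ts \<noteq> [] \<and> sorted_wrt (<) ts \<and> hd ts = 0 \<and> last ts = 1 \<and>
        (\<forall>i < length ts - 1. \<forall>t \<in> {ts ! i .. ts ! Suc i}.
           g t = g (ts ! i) + of_real ((t - ts ! i) / (ts ! Suc i - ts ! i)) * (g (ts ! Suc i) - g (ts ! i)))) \<and>
     (\<exists>t\<in>{0..1}. g t \<noteq> g 0)"

definition s_tilde :: "(complex \<Rightarrow> ennreal) \<Rightarrow> (real \<Rightarrow> complex) \<Rightarrow> ennreal" where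
  "s_tilde lm g = path_length g 0 1 * (\<integral>\<^sup>+ t \<in> {0..1}. ennsqrt (lm (g t)) \<partial>lborel)"

definition rho :: "(complex \<Rightarrow> ennreal) \<Rightarrow> complex set \<Rightarrow> complex \<Rightarrow> complex \<Rightarrow> ennreal" where
  "rho lm M a b = (INF g \<in> {g. broken_line g \<and> arclength_param g \<and> g ` {0..1} \<subseteq> M \<and>
                                g 0 = a \<and> g 1 = b}. s_tilde lm g)"

end

theory Submission
  imports Defs
begin


lemma msupport_AE:
  fixes \<omega> :: "complex measure"
  assumes sets: "sets \<omega> = sets borel"
  shows "AE \<zeta> in \<omega>. \<zeta> \<in> msupport \<omega>"
proof -
  define F where "F = {ball x e | x e. e > 0 \<and> emeasure \<omega> (ball x e) = 0}"
  have opF: "\<And>S. S \<in> F \<Longrightarrow> open S" unfolding F_def by auto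
  have UF: "\<Union>F = - msupport \<omega>"
  proof
    show "\<Union>F \<subseteq> - msupport \<omega>"
    proof
      fix y assume "y \<in> \<Union>F"
      then obtain x e where xe: "e > 0" "emeasure \<omega> (ball x e) = 0" "y \<in> ball x e"
        unfolding F_def by blast
      have sub: "ball y (e - dist x y) \<subseteq> ball x e"
        by (rule ball_subset_ball_iff[THEN iffD2]) (simp add: dist_commute)
      have "ball x e \<in> sets \<omega>" using sets by simp
      then have "emeasure \<omega> (ball y (e - dist x y)) \<le> emeasure \<omega> (ball x e)"
        using emeasure_mono[OF sub] by blast
      then have z: "emeasure \<omega> (ball y (e - dist x y)) = 0" using xe(2) by simp
      have pos: "e - dist x y > 0" using xe(3) by (simp add: dist_commute)
      show "y \<in> - msupport \<omega>"
      proof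
        assume "y \<in> msupport \<omega>"
        then have "emeasure \<omega> (ball y (e - dist x y)) > 0" using pos unfolding msupport_def by blast
        with z show False by simp
      qed
    qed
  next
    show "- msupport \<omega> \<subseteq> \<Union>F"
    proof
      fix y assume "y \<in> - msupport \<omega>"
      then obtain e where e: "e > 0" "\<not> emeasure \<omega> (ball y e) > 0" unfolding msupport_def by blast
      then have "emeasure \<omega> (ball y e) = 0" by (simp add: not_gr_zero)
      then have "ball y e \<in> F" unfolding F_def using e(1) by blast
      moreover have "y \<in> ball y e" using e(1) by simp
      ultimately show "y \<in> \<Union>F" by blast
    qed
  qed
  obtain F' where F': "F' \<subseteq> F" "countable F'" "\<Union>F' = \<Union>F"
    using Lindelof[OF opF] by blast
  have "(\<Union>S\<in>F'. S) \<in> null_sets \<omega>"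
  proof (rule null_sets_UN')
    show "countable F'" by fact
    fix S assume "S \<in> F'"
    then have "S \<in> F" using F' by blast
    then obtain x e where "S = ball x e" "emeasure \<omega> (ball x e) = 0" unfolding F_def by blast
    moreover have "ball x e \<in> sets \<omega>" using sets by simp
    ultimately show "S \<in> null_sets \<omega>" by (simp add: null_sets_def)
  qed
  then have N: "- msupport \<omega> \<in> null_sets \<omega>" using F' UF by simp
  show ?thesis by (rule AE_I'[OF N]) blast
qed



lemma sqrt_exp_m2: "sqrt (exp (-2*x)) = exp (-x)"
proof -
  have "exp (-2*x) = (exp (-x))^2" by (simp add: power2_eq_square flip: exp_add)
  then show ?thesis by simp
qed

lemma minf_div_pos: "(c::real) > 0 \<Longrightarrow> (-\<infinity>) / ereal c = -\<infinity>"
  by (simp add: divide_ereal_def)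

lemma lp_minf: "0 \<le> p \<Longrightarrow> (enn2ereal (ennreal p) - enn2ereal top) / ereal (2 * pi) = -\<infinity>"
  by (simp add: enn2ereal_ennreal minf_div_pos)

lemma lp_fin: "0 \<le> p \<Longrightarrow> 0 \<le> n \<Longrightarrow> (enn2ereal (ennreal p) - enn2ereal (ennreal n)) / ereal (2 * pi) = ereal ((p - n) / (2*pi))"
  by (simp add: enn2ereal_ennreal)

lemma near_bound:
  fixes \<omega> :: "complex measure" and h :: "complex \<Rightarrow> real"
  assumes sets: "sets \<omega> = sets borel" and fin: "finite_measure \<omega>" and cpt: "compact (msupport \<omega>)"
    and big: "emeasure \<omega> {z0} \<ge> ennreal (2*pi)" and hc: "isCont h z0"
  shows "\<exists>\<delta>>0. \<exists>c>0. lam \<omega> h z0 = \<infinity> \<and>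
     (\<forall>z. 0 < cmod (z - z0) \<and> cmod (z - z0) < \<delta> \<longrightarrow> ennreal (c / cmod (z - z0)) \<le> ennsqrt (lam \<omega> h z))"
proof -
  define P where "P z = (\<integral>\<^sup>+ \<zeta>. (if \<zeta> = z then 0 else ennreal (max 0 (ln (cmod (z - \<zeta>))))) \<partial>\<omega>)" for z
  define N where "N z = (\<integral>\<^sup>+ \<zeta>. (if \<zeta> = z then \<infinity> else ennreal (max 0 (- ln (cmod (z - \<zeta>))))) \<partial>\<omega>)" for z
  have lp: "log_potential \<omega> z = (enn2ereal (P z) - enn2ereal (N z)) / ereal (2*pi)" for z
    unfolding log_potential_def P_def N_def by simp
  obtain R1 where R1: "\<forall>\<zeta>\<in>msupport \<omega>. cmod \<zeta> \<le> R1"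
    using compact_imp_bounded[OF cpt] by (auto simp: bounded_iff)
  define R where "R = cmod z0 + 1 + \<bar>R1\<bar>"
  have R0: "R \<ge> 0" unfolding R_def by simp
  define E where "E = emeasure \<omega> (space \<omega>)"
  have Efin: "E \<noteq> \<infinity>" unfolding E_def using finite_measure.emeasure_finite[OF fin] by simp
  define B where "B = R * enn2real E"
  have B0: "B \<ge> 0" unfolding B_def using R0 by simp
  have z0s: "{z0} \<in> sets \<omega>" using sets by simp
  have Pb: "P z \<le> ennreal B" if "cmod (z - z0) < 1" for z
  proof -
    have "AE \<zeta> in \<omega>. (if \<zeta> = z then 0 else ennreal (max 0 (ln (cmod (z - \<zeta>))))) \<le> ennreal R"
      using msupport_AE[OF sets]
    proof eventually_elim
      case (elim \<zeta>)
      have "cmod z \<le> cmod z0 + 1" using that norm_triangle_ineq2[of z z0] by simp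
      have "cmod \<zeta> \<le> \<bar>R1\<bar>" using R1 elim by (meson abs_ge_self order_trans)
      then have d: "cmod (z - \<zeta>) \<le> R" using \<open>cmod z \<le> cmod z0 + 1\<close> norm_triangle_ineq4[of z \<zeta>] unfolding R_def by linarith
      have "ln (cmod (z - \<zeta>)) \<le> cmod (z - \<zeta>)"
      proof (cases "cmod (z - \<zeta>) = 0")
        case True then show ?thesis by simp
      next
        case False then show ?thesis using ln_le_minus_one[of "cmod (z - \<zeta>)"] by simp
      qed
      then show ?case using d R0 by (auto intro!: ennreal_leI)
    qed
    then have "P z \<le> (\<integral>\<^sup>+ \<zeta>. ennreal R \<partial>\<omega>)" unfolding P_def by (rule nn_integral_mono_AE)
    also have "\<dots> = ennreal R * E" unfolding E_def by simp
    also have "\<dots> = ennreal B" unfolding B_def using Efin R0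
      by (simp add: ennreal_mult ennreal_enn2real_if)
    finally show ?thesis .
  qed
  have Nb: "N z \<ge> ennreal (2*pi * (- ln (cmod (z - z0))))" if "z \<noteq> z0" "cmod (z - z0) < 1" for z
  proof -
    have "(\<integral>\<^sup>+ \<zeta>. ennreal (- ln (cmod (z - z0))) * indicator {z0} \<zeta> \<partial>\<omega>) \<le> N z"
      unfolding N_def using that by (intro nn_integral_mono) (auto simp: indicator_def intro!: ennreal_leI)
    moreover have "(\<integral>\<^sup>+ \<zeta>. ennreal (- ln (cmod (z - z0))) * indicator {z0} \<zeta> \<partial>\<omega>)
        = ennreal (- ln (cmod (z - z0))) * emeasure \<omega> {z0}"
      using z0s by (rule nn_integral_cmult_indicator)
    moreover have "ennreal (- ln (cmod (z - z0))) * ennreal (2*pi) \<le> ennreal (- ln (cmod (z - z0))) * emeasure \<omega> {z0}"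
      using big by (intro mult_left_mono) auto
    moreover have "ennreal (- ln (cmod (z - z0))) * ennreal (2*pi) = ennreal (2*pi * (- ln (cmod (z - z0))))"
      using that by (subst ennreal_mult[symmetric]) (auto simp: mult.commute)
    ultimately show ?thesis by (metis order_trans)
  qed
  have N0: "N z0 = \<infinity>"
  proof -
    have "(\<integral>\<^sup>+ \<zeta>. \<infinity> * indicator {z0} \<zeta> \<partial>\<omega>) \<le> N z0"
      unfolding N_def by (intro nn_integral_mono) (auto simp: indicator_def)
    moreover have "(\<integral>\<^sup>+ \<zeta>. \<infinity> * indicator {z0} \<zeta> \<partial>\<omega>) = \<infinity> * emeasure \<omega> {z0}"
      using z0s by (rule nn_integral_cmult_indicator)
    moreover have "emeasure \<omega> {z0} \<noteq> 0"
    proof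
      assume "emeasure \<omega> {z0} = 0"
      with big have "ennreal (2*pi) \<le> 0" by simp
      then show False by simp
    qed
    ultimately show ?thesis by (simp add: ennreal_mult_eq_top_iff top_unique)
  qed
  have Pfin: "\<exists>p. P z = ennreal p \<and> 0 \<le> p \<and> p \<le> B" if "cmod (z - z0) < 1" for z
  proof -
    have "P z \<noteq> \<infinity>" using Pb[OF that] by (auto simp: top_unique)
    then obtain p where "P z = ennreal p" "0 \<le> p" by (cases "P z") auto
    with Pb[OF that] B0 show ?thesis by (auto simp: ennreal_le_iff)
  qed
  have lam0: "lam \<omega> h z0 = \<infinity>"
  proof -
    obtain p where "P z0 = ennreal p" "0 \<le> p" using Pfin[of z0] by auto
    then have "log_potential \<omega> z0 = -\<infinity>" unfolding lp using N0 lp_minf by simp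
    then show ?thesis unfolding lam_def by simp
  qed
  obtain \<delta>1 where \<delta>1: "\<delta>1 > 0" "\<forall>z. z \<noteq> z0 \<and> norm (z - z0) < \<delta>1 \<longrightarrow> norm (h z - h z0) < 1"
    using LIM_D[OF hc[unfolded isCont_def], of 1] by auto
  define H where "H = h z0 + 1"
  define K where "K = B / (2*pi) + H"
  define c where "c = exp (-K)"
  define \<delta> where "\<delta> = min 1 \<delta>1"
  have main: "ennreal (c / cmod (z - z0)) \<le> ennsqrt (lam \<omega> h z)"
    if z: "0 < cmod (z - z0)" "cmod (z - z0) < \<delta>" for z
  proof -
    define d where "d = cmod (z - z0)"
    have d: "0 < d" "d < 1" "d < \<delta>1" using z unfolding d_def \<delta>_def by auto
    have zz: "z \<noteq> z0" using z by auto
    have hz: "h z \<le> H" using \<delta>1(2) zz d unfolding H_def d_def by (auto simp: abs_less_iff)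
    obtain p where p: "P z = ennreal p" "0 \<le> p" "p \<le> B" using Pfin[of z] d unfolding d_def by auto
    have Nz: "N z \<ge> ennreal (2*pi * (- ln d))" using Nb[OF zz] d unfolding d_def by auto
    show ?thesis
    proof (cases "N z = \<infinity>")
      case True
      then have "log_potential \<omega> z = -\<infinity>" unfolding lp using p lp_minf by simp
      then show ?thesis unfolding lam_def ennsqrt_def by simp
    next
      case False
      then obtain n where n: "N z = ennreal n" "0 \<le> n" by (cases "N z") auto
      have nb: "n \<ge> 2*pi * (- ln d)"
      proof -
        have "- ln d \<ge> 0" using d by simp
        then show ?thesis using Nz n by (auto simp: ennreal_le_iff)
      qed
      define r where "r = (p - n) / (2*pi)"
      have "log_potential \<omega> z = ereal r" unfolding lp r_def using p n lp_fin by simp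
      then have lz: "lam \<omega> h z = ennreal (exp (-2 * (r + h z)))" unfolding lam_def by simp
      have rb: "r \<le> B/(2*pi) + ln d"
      proof -
        have "p - n \<le> B + 2*pi*ln d" using nb p by linarith
        then have "(p - n)/(2*pi) \<le> (B + 2*pi*ln d)/(2*pi)" by (simp add: divide_right_mono)
        then show ?thesis unfolding r_def by (simp add: add_divide_distrib)
      qed
      have "c / d = exp (-K - ln d)" unfolding c_def using d by (simp add: exp_diff)
      also have "\<dots> \<le> exp (-(r + h z))" using rb hz unfolding K_def by simp
      also have "\<dots> = sqrt (exp (-2 * (r + h z)))" by (rule sqrt_exp_m2[symmetric])
      finally have "c / d \<le> sqrt (exp (-2 * (r + h z)))" .
      then show ?thesis unfolding lz ennsqrt_def d_def by (auto intro!: ennreal_leI)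
    qed
  qed
  show ?thesis
    apply (rule exI[of _ \<delta>], intro conjI)
    subgoal using \<delta>1 unfolding \<delta>_def by simp
    apply (rule exI[of _ c], intro conjI)
    subgoal unfolding c_def by simp
    using lam0 main by auto
qed



lemma div_left:
  fixes a b c :: real
  assumes ab: "a < b" and c: "c > 0"
  shows "(\<integral>\<^sup>+ x. ennreal (c / (x - a)) * indicator {a<..b} x \<partial>lborel) = \<infinity>"
proof -
  let ?I = "\<integral>\<^sup>+ x. ennreal (c / (x - a)) * indicator {a<..b} x \<partial>lborel"
  have lb: "ennreal (c * (ln (b - a) - ln e)) \<le> ?I" if e: "0 < e" "e < b - a" for e
  proof -
    have "((\<lambda>x. c / (x - a)) has_integral (c * ln (b - a) - c * ln (a + e - a))) {a + e..b}"
    proof (rule fundamental_theorem_of_calculus)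
      show "a + e \<le> b" using e by simp
      fix x assume x: "x \<in> {a + e..b}"
      then have "x - a > 0" using e by simp
      have "((\<lambda>x. c * ln (x - a)) has_real_derivative c / (x - a)) (at x within {a + e..b})"
        using \<open>x - a > 0\<close> by (auto intro!: derivative_eq_intros simp: field_simps)
      then show "((\<lambda>x. c * ln (x - a)) has_vector_derivative c / (x - a)) (at x within {a + e..b})"
        by (simp add: has_real_derivative_iff_has_vector_derivative)
    qed
    then have hi: "((\<lambda>x. c / (x - a)) has_integral (c * (ln (b - a) - ln e))) {a + e..b}"
      by (simp add: right_diff_distrib)
    have "(\<integral>\<^sup>+ x. ennreal (c / (x - a)) * indicator {a + e..b} x \<partial>lborel) = ennreal (c * (ln (b - a) - ln e))"
      by (rule nn_integral_has_integral_lebesgue'[OF _ hi]) (use e c in auto)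
    moreover have "(\<integral>\<^sup>+ x. ennreal (c / (x - a)) * indicator {a + e..b} x \<partial>lborel) \<le> ?I"
      using e by (intro nn_integral_mono) (auto simp: indicator_def)
    ultimately show ?thesis by simp
  qed
  show ?thesis
  proof (rule ccontr)
    assume "?I \<noteq> \<infinity>"
    then obtain r where r: "?I = ennreal r" "0 \<le> r" by (cases ?I) auto
    define e where "e = (b - a) * exp (-(r + 1) / c)"
    have e0: "0 < e" unfolding e_def using ab by simp
    have "-(r + 1) / c < 0" using r c by (simp add: divide_neg_pos)
    then have "exp (-(r + 1) / c) < 1" by simp
    then have e1: "e < b - a" unfolding e_def using ab by simp
    have "ln e = ln (b - a) + ln (exp (-(r + 1) / c))" unfolding e_def
      using ab ln_mult[of "b - a" "exp (-(r + 1) / c)"] by simp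
    moreover have "(-(r + 1) / c) = - ((r + 1) / c)" by (simp add: minus_divide_left)
    ultimately have "ln e = ln (b - a) - (r + 1) / c" by simp
    then have "c * (ln (b - a) - ln e) = r + 1" using c by simp
    then have "ennreal (r + 1) \<le> ennreal r" using lb[OF e0 e1] r by simp
    then show False using r by (simp add: ennreal_le_iff)
  qed
qed

lemma div_right:
  fixes a b c :: real
  assumes ab: "a < b" and c: "c > 0"
  shows "(\<integral>\<^sup>+ x. ennreal (c / (b - x)) * indicator {a..<b} x \<partial>lborel) = \<infinity>"
proof -
  let ?I = "\<integral>\<^sup>+ x. ennreal (c / (b - x)) * indicator {a..<b} x \<partial>lborel"
  have lb: "ennreal (c * (ln (b - a) - ln e)) \<le> ?I" if e: "0 < e" "e < b - a" for e
  proof -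
    have "((\<lambda>x. c / (b - x)) has_integral (- c * ln (b - (b - e)) - (- c * ln (b - a)))) {a..b - e}"
    proof (rule fundamental_theorem_of_calculus)
      show "a \<le> b - e" using e by simp
      fix x assume x: "x \<in> {a..b - e}"
      then have "b - x > 0" using e by simp
      have "((\<lambda>x. - c * ln (b - x)) has_real_derivative c / (b - x)) (at x within {a..b - e})"
        using \<open>b - x > 0\<close> by (auto intro!: derivative_eq_intros simp: field_simps)
      then show "((\<lambda>x. - c * ln (b - x)) has_vector_derivative c / (b - x)) (at x within {a..b - e})"
        by (simp add: has_real_derivative_iff_has_vector_derivative)
    qed
    then have hi: "((\<lambda>x. c / (b - x)) has_integral (c * (ln (b - a) - ln e))) {a..b - e}"
      by (simp add: right_diff_distrib)
    have "(\<integral>\<^sup>+ x. ennreal (c / (b - x)) * indicator {a..b - e} x \<partial>lborel) = ennreal (c * (ln (b - a) - ln e))"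
      by (rule nn_integral_has_integral_lebesgue'[OF _ hi]) (use e c in auto)
    moreover have "(\<integral>\<^sup>+ x. ennreal (c / (b - x)) * indicator {a..b - e} x \<partial>lborel) \<le> ?I"
      using e by (intro nn_integral_mono) (auto simp: indicator_def)
    ultimately show ?thesis by simp
  qed
  show ?thesis
  proof (rule ccontr)
    assume "?I \<noteq> \<infinity>"
    then obtain r where r: "?I = ennreal r" "0 \<le> r" by (cases ?I) auto
    define e where "e = (b - a) * exp (-(r + 1) / c)"
    have e0: "0 < e" unfolding e_def using ab by simp
    have "-(r + 1) / c < 0" using r c by (simp add: divide_neg_pos)
    then have "exp (-(r + 1) / c) < 1" by simp
    then have e1: "e < b - a" unfolding e_def using ab by simp
    have "ln e = ln (b - a) + ln (exp (-(r + 1) / c))" unfolding e_def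
      using ab ln_mult[of "b - a" "exp (-(r + 1) / c)"] by simp
    moreover have "(-(r + 1) / c) = - ((r + 1) / c)" by (simp add: minus_divide_left)
    ultimately have "ln e = ln (b - a) - (r + 1) / c" by simp
    then have "c * (ln (b - a) - ln e) = r + 1" using c by simp
    then have "ennreal (r + 1) \<le> ennreal r" using lb[OF e0 e1] r by simp
    then show False using r by (simp add: ennreal_le_iff)
  qed
qed



lemma blowup_left:
  fixes F :: "complex \<Rightarrow> ennreal" and g :: "real \<Rightarrow> complex"
  assumes \<delta>: "\<delta> > 0" and c: "c > 0" and C: "C > 0" and Fz0: "F z0 = \<infinity>"
    and Fb: "\<forall>z. 0 < cmod (z - z0) \<and> cmod (z - z0) < \<delta> \<longrightarrow> ennreal (c / cmod (z - z0)) \<le> F z"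
    and ab: "a < b" "0 \<le> a" "b \<le> 1"
    and gb: "\<forall>t\<in>{a..b}. cmod (g t - z0) \<le> C * (t - a)"
  shows "(\<integral>\<^sup>+ t. F (g t) * indicator {0..1} t \<partial>lborel) = \<infinity>"
proof -
  define \<eta> where "\<eta> = min (b - a) (\<delta> / (2 * C))"
  have \<eta>: "\<eta> > 0" "\<eta> \<le> b - a" "C * \<eta> < \<delta>" unfolding \<eta>_def using ab \<delta> C
    by (auto simp: min_def field_simps)
  have pt: "ennreal ((c / C) / (t - a)) * indicator {a<..a + \<eta>} t \<le> F (g t) * indicator {0..1} t" for t
  proof (cases "t \<in> {a<..a + \<eta>}")
    case False then show ?thesis by simp
  next
    case True
    then have t: "a < t" "t \<le> a + \<eta>" by auto
    then have t01: "t \<in> {0..1}" and tab: "t \<in> {a..b}" using \<eta> ab by auto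
    have d: "cmod (g t - z0) \<le> C * (t - a)" using gb tab by blast
    have "C * (t - a) \<le> C * \<eta>" using t C by simp
    then have dd: "cmod (g t - z0) < \<delta>" using d \<eta> by linarith
    have "ennreal ((c / C) / (t - a)) \<le> F (g t)"
    proof (cases "g t = z0")
      case True then show ?thesis using Fz0 by simp
    next
      case False
      then have d0: "0 < cmod (g t - z0)" by simp
      have "(c / C) / (t - a) = c / (C * (t - a))" by simp
      also have "\<dots> \<le> c / cmod (g t - z0)"
        using d d0 c C t by (intro divide_left_mono) auto
      finally have "ennreal ((c / C) / (t - a)) \<le> ennreal (c / cmod (g t - z0))"
        by (rule ennreal_leI)
      also have "\<dots> \<le> F (g t)" using Fb d0 dd by blast
      finally show ?thesis .
    qed
    then show ?thesis using True t01 by simp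
  qed
  have "(\<integral>\<^sup>+ t. ennreal ((c / C) / (t - a)) * indicator {a<..a + \<eta>} t \<partial>lborel) = \<infinity>"
    by (rule div_left) (use \<eta> c C in auto)
  moreover have "(\<integral>\<^sup>+ t. ennreal ((c / C) / (t - a)) * indicator {a<..a + \<eta>} t \<partial>lborel)
      \<le> (\<integral>\<^sup>+ t. F (g t) * indicator {0..1} t \<partial>lborel)"
    by (intro nn_integral_mono) (use pt in auto)
  ultimately show ?thesis by (simp add: top_unique)
qed

lemma blowup_right:
  fixes F :: "complex \<Rightarrow> ennreal" and g :: "real \<Rightarrow> complex"
  assumes \<delta>: "\<delta> > 0" and c: "c > 0" and C: "C > 0" and Fz0: "F z0 = \<infinity>"
    and Fb: "\<forall>z. 0 < cmod (z - z0) \<and> cmod (z - z0) < \<delta> \<longrightarrow> ennreal (c / cmod (z - z0)) \<le> F z"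
    and ab: "a < b" "0 \<le> a" "b \<le> 1"
    and gb: "\<forall>t\<in>{a..b}. cmod (g t - z0) \<le> C * (b - t)"
  shows "(\<integral>\<^sup>+ t. F (g t) * indicator {0..1} t \<partial>lborel) = \<infinity>"
proof -
  define \<eta> where "\<eta> = min (b - a) (\<delta> / (2 * C))"
  have \<eta>: "\<eta> > 0" "\<eta> \<le> b - a" "C * \<eta> < \<delta>" unfolding \<eta>_def using ab \<delta> C
    by (auto simp: min_def field_simps)
  have pt: "ennreal ((c / C) / (b - t)) * indicator {b - \<eta>..<b} t \<le> F (g t) * indicator {0..1} t" for t
  proof (cases "t \<in> {b - \<eta>..<b}")
    case False then show ?thesis by simp
  next
    case True
    then have t: "t < b" "b - \<eta> \<le> t" by auto
    then have t01: "t \<in> {0..1}" and tab: "t \<in> {a..b}" using \<eta> ab by auto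
    have d: "cmod (g t - z0) \<le> C * (b - t)" using gb tab by blast
    have "C * (b - t) \<le> C * \<eta>" using t C by simp
    then have dd: "cmod (g t - z0) < \<delta>" using d \<eta> by linarith
    have "ennreal ((c / C) / (b - t)) \<le> F (g t)"
    proof (cases "g t = z0")
      case True then show ?thesis using Fz0 by simp
    next
      case False
      then have d0: "0 < cmod (g t - z0)" by simp
      have "(c / C) / (b - t) = c / (C * (b - t))" by simp
      also have "\<dots> \<le> c / cmod (g t - z0)"
        using d d0 c C t by (intro divide_left_mono) auto
      finally have "ennreal ((c / C) / (b - t)) \<le> ennreal (c / cmod (g t - z0))"
        by (rule ennreal_leI)
      also have "\<dots> \<le> F (g t)" using Fb d0 dd by blast
      finally show ?thesis .
    qed
    then show ?thesis using True t01 by simp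
  qed
  have "(\<integral>\<^sup>+ t. ennreal ((c / C) / (b - t)) * indicator {b - \<eta>..<b} t \<partial>lborel) = \<infinity>"
    by (rule div_right) (use \<eta> c C in auto)
  moreover have "(\<integral>\<^sup>+ t. ennreal ((c / C) / (b - t)) * indicator {b - \<eta>..<b} t \<partial>lborel)
      \<le> (\<integral>\<^sup>+ t. F (g t) * indicator {0..1} t \<partial>lborel)"
    by (intro nn_integral_mono) (use pt in auto)
  ultimately show ?thesis by (simp add: top_unique)
qed

lemma path_length_ge:
  assumes "a \<le> b"
  shows "ennreal (dist (g a) (g b)) \<le> path_length g a b"
proof -
  have "[a, b] \<in> {ts. ts \<noteq> [] \<and> sorted ts \<and> hd ts = a \<and> last ts = b}" using assms by simp
  then have "(\<Sum>i<length [a,b] - 1. ennreal (dist (g ([a,b] ! i)) (g ([a,b] ! Suc i)))) \<le> path_length g a b"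
    unfolding path_length_def by (rule SUP_upper)
  then show ?thesis by simp
qed



theorem lemma4p20:
  fixes M :: "complex set" and \<omega> :: "complex measure" and h :: "complex \<Rightarrow> real" and z0 :: complex
  assumes "open M" and "connected M" and "bounded M"
    and "sets \<omega> = sets borel" and "finite_measure \<omega>" and "compact (msupport \<omega>)"
    and "harmonic_on M h"
    and "z0 \<in> M" and "emeasure \<omega> {z0} \<ge> ennreal (2 * pi)"
  shows "(\<forall>g. broken_line g \<and> arclength_param g \<and> g ` {0..1} \<subseteq> M \<and> (g 0 = z0 \<or> g 1 = z0)
            \<longrightarrow> s_tilde (lam \<omega> h) g = \<infinity>)
       \<and> (\<forall>z \<in> M - {z0}. rho (lam \<omega> h) M z0 z = \<infinity>)"
proof -
  obtain hx hy where hd: "\<forall>z\<in>M. (h has_derivative (\<lambda>v. Re v * hx z + Im v * hy z)) (at z)"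
    using assms(7) unfolding harmonic_on_def by (elim conjE exE) (rule that, assumption)
  have hc: "isCont h z0" using hd assms(8) has_derivative_continuous by blast
  obtain \<delta> c where \<delta>: "\<delta> > 0" and c: "c > 0" and lz0: "lam \<omega> h z0 = \<infinity>"
    and Fb: "\<forall>z. 0 < cmod (z - z0) \<and> cmod (z - z0) < \<delta> \<longrightarrow> ennreal (c / cmod (z - z0)) \<le> ennsqrt (lam \<omega> h z)"
    using near_bound[OF assms(4,5,6,9) hc] by (elim conjE exE) (rule that, assumption+)
  define F where "F z = ennsqrt (lam \<omega> h z)" for z
  have Fz0: "F z0 = \<infinity>" unfolding F_def ennsqrt_def using lz0 by simp
  have Fb': "\<forall>z. 0 < cmod (z - z0) \<and> cmod (z - z0) < \<delta> \<longrightarrow> ennreal (c / cmod (z - z0)) \<le> F z"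
    using Fb unfolding F_def by blast
  have part1: "s_tilde (lam \<omega> h) g = \<infinity>"
    if g: "broken_line g" "arclength_param g" "g 0 = z0 \<or> g 1 = z0" for g
  proof -
    obtain ts where ts: "ts \<noteq> []" "sorted_wrt (<) ts" "hd ts = 0" "last ts = 1"
      and aff: "\<forall>i < length ts - 1. \<forall>t \<in> {ts ! i .. ts ! Suc i}.
           g t = g (ts ! i) + of_real ((t - ts ! i) / (ts ! Suc i - ts ! i)) * (g (ts ! Suc i) - g (ts ! i))"
      and nc: "\<exists>t\<in>{0..1}. g t \<noteq> g 0"
      using g(1) unfolding broken_line_def by (elim conjE exE) (rule that, assumption+)
    define L where "L = path_length g 0 1"
    have L0: "L \<noteq> 0"
    proof
      assume L: "L = 0"
      obtain t where t: "t \<in> {0..1}" "g t \<noteq> g 0" using nc by blast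
      have ap: "\<forall>a b. 0 \<le> a \<and> a \<le> b \<and> b \<le> 1 \<longrightarrow> path_length g a b = ennreal (b - a) * path_length g 0 1"
        using g(2) unfolding arclength_param_def .
      have tt: "0 \<le> (0::real) \<and> 0 \<le> t \<and> t \<le> 1" using t(1) by simp
      have "path_length g 0 t = ennreal (t - 0) * path_length g 0 1"
        using ap[rule_format, OF tt] .
      then have p0: "path_length g 0 t = 0" using L unfolding L_def by simp
      have "0 \<le> t" using t(1) by simp
      then have "ennreal (dist (g 0) (g t)) \<le> path_length g 0 t" by (rule path_length_ge)
      then have "ennreal (dist (g 0) (g t)) = 0" using p0 by simp
      moreover have "dist (g 0) (g t) > 0" using t(2) by simp
      ultimately show False by simp
    qed
    define n where "n = length ts"
    have t0: "ts ! 0 = 0" using ts by (simp add: hd_conv_nth)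
    have t1: "ts ! (n - 1) = 1" using ts unfolding n_def by (simp add: last_conv_nth)
    have n2: "n \<ge> 2"
    proof (rule ccontr)
      assume "\<not> n \<ge> 2"
      moreover have "n \<noteq> 0" using ts unfolding n_def by simp
      ultimately have "n = 1" by simp
      then show False using t0 t1 by simp
    qed
    have lt: "ts ! i < ts ! j" if "i < j" "j < n" for i j
      using sorted_wrt_nth_less[OF ts(2)] that unfolding n_def by blast
    have I: "(\<integral>\<^sup>+ t. F (g t) * indicator {0..1} t \<partial>lborel) = \<infinity>"
    proof (cases "g 0 = z0")
      case True
      define b where "b = ts ! Suc 0"
      have b0: "0 < b" unfolding b_def using lt[of 0 1] n2 t0 by simp
      have b1: "b \<le> 1"
      proof (cases "n = 2")
        case True then show ?thesis using t1 unfolding b_def by simp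
      next
        case False
        then have "1 < n - 1" using n2 by simp
        then have "ts ! 1 < ts ! (n - 1)" using lt[of 1 "n - 1"] n2 by simp
        then show ?thesis using t1 unfolding b_def by simp
      qed
      have "0 < length ts - 1" using n2 unfolding n_def by simp
      then have aff0: "\<forall>t \<in> {ts ! 0 .. ts ! Suc 0}. g t = g (ts ! 0) + of_real ((t - ts ! 0) / (ts ! Suc 0 - ts ! 0)) * (g (ts ! Suc 0) - g (ts ! 0))"
        by (rule aff[THEN spec[of _ 0], THEN mp])
      have affb: "\<forall>t \<in> {0 .. b}. g t = g 0 + of_real (t / b) * (g b - g 0)"
        using aff0 unfolding t0 b_def[symmetric] diff_zero .
      define K where "K = cmod (g b - g 0)"
      define C where "C = K / b + 1"
      have C: "C > 0" unfolding C_def K_def using b0 by (simp add: add_nonneg_pos)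
      have gb: "\<forall>t\<in>{0..b}. cmod (g t - z0) \<le> C * (t - 0)"
      proof
        fix t assume t: "t \<in> {0..b}"
        have gt: "g t = g 0 + of_real (t / b) * (g b - g 0)" using affb t by blast
        have e: "g t - z0 = of_real (t / b) * (g b - g 0)" unfolding gt True[symmetric] by simp
        have "cmod (g t - z0) = \<bar>t / b\<bar> * K" unfolding e K_def by (simp only: norm_mult norm_of_real)
        also have "\<bar>t / b\<bar> = t / b" using t b0 by simp
        also have "t / b * K = t * (K / b)" by simp
        also have "t * (K / b) \<le> t * C" unfolding C_def using t by (intro mult_left_mono) auto
        finally show "cmod (g t - z0) \<le> C * (t - 0)" by (simp add: mult.commute)
      qed
      show ?thesis by (rule blowup_left[OF \<delta> c C Fz0 Fb' b0 _ b1 gb]) simp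
    next
      case False
      then have g1: "g 1 = z0" using g(3) by simp
      define a where "a = ts ! (n - 2)"
      have sn: "Suc (n - 2) = n - 1" using n2 by simp
      have a1: "a < 1" unfolding a_def using lt[of "n - 2" "n - 1"] n2 t1 by simp
      have a0: "0 \<le> a"
      proof (cases "n = 2")
        case True then show ?thesis using t0 unfolding a_def by simp
      next
        case False
        then have "0 < n - 2" using n2 by simp
        then have "ts ! 0 < ts ! (n - 2)" using lt[of 0 "n - 2"] n2 by simp
        then show ?thesis using t0 unfolding a_def by simp
      qed
      have "n - 2 < length ts - 1" using n2 unfolding n_def by simp
      then have affn: "\<forall>t \<in> {ts ! (n - 2) .. ts ! Suc (n - 2)}. g t = g (ts ! (n - 2)) + of_real ((t - ts ! (n - 2)) / (ts ! Suc (n - 2) - ts ! (n - 2))) * (g (ts ! Suc (n - 2)) - g (ts ! (n - 2)))"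
        by (rule aff[THEN spec[of _ "n - 2"], THEN mp])
      have affa: "\<forall>t \<in> {a .. 1}. g t = g a + of_real ((t - a) / (1 - a)) * (g 1 - g a)"
        using affn unfolding sn t1 a_def[symmetric] .
      define K where "K = cmod (g a - g 1)"
      define C where "C = K / (1 - a) + 1"
      have C: "C > 0" unfolding C_def K_def using a1 by (simp add: add_nonneg_pos)
      have gb: "\<forall>t\<in>{a..1}. cmod (g t - z0) \<le> C * (1 - t)"
      proof
        fix t assume t: "t \<in> {a..1}"
        define s where "s = (t - a) / (1 - a)"
        have gt: "g t = g a + of_real s * (g 1 - g a)" using affa t unfolding s_def by blast
        have "g t - z0 = (1 - of_real s) * (g a - g 1)"
          unfolding gt g1[symmetric] by (simp add: algebra_simps)
        also have "(1 - of_real s :: complex) = of_real (1 - s)" by simp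
        finally have e: "g t - z0 = of_real (1 - s) * (g a - g 1)" .
        have s1: "1 - s = (1 - t) / (1 - a)" unfolding s_def using a1 by (simp add: field_simps)
        have "cmod (g t - z0) = \<bar>1 - s\<bar> * K" unfolding e K_def by (simp only: norm_mult norm_of_real)
        also have "\<bar>1 - s\<bar> = (1 - t) / (1 - a)" unfolding s1 using t a1 by simp
        also have "(1 - t) / (1 - a) * K = (1 - t) * (K / (1 - a))" by simp
        also have "\<dots> \<le> (1 - t) * C" unfolding C_def using t by (intro mult_left_mono) auto
        finally show "cmod (g t - z0) \<le> C * (1 - t)" by (simp add: mult.commute)
      qed
      show ?thesis by (rule blowup_right[OF \<delta> c C Fz0 Fb' a1 a0 _ gb]) simp
    qed
    have "s_tilde (lam \<omega> h) g = L * (\<integral>\<^sup>+ t. F (g t) * indicator {0..1} t \<partial>lborel)"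
      unfolding s_tilde_def L_def F_def by simp
    also have "\<dots> = \<infinity>" using I L0 by (simp add: ennreal_mult_top)
    finally show ?thesis .
  qed
  show ?thesis
  proof (intro conjI allI impI ballI)
    fix g assume "broken_line g \<and> arclength_param g \<and> g ` {0..1} \<subseteq> M \<and> (g 0 = z0 \<or> g 1 = z0)"
    then show "s_tilde (lam \<omega> h) g = \<infinity>" using part1 by blast
  next
    fix z assume "z \<in> M - {z0}"
    show "rho (lam \<omega> h) M z0 z = \<infinity>"
      unfolding rho_def
      by (rule order.antisym) (auto intro!: INF_greatest simp: part1)
  qed
qed


end
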